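(* For every disjunctive program $P$ the following are equivalent: (1) $P$ is finitely recursive; (2) $P$ has a smooth splitting sequence of length $\mu\le\omega$.
   Context: A disjunctive program is a set of rules $A_1\vee\dots\vee A_m\leftarrow L_1,\dots,L_n$ ($m>0$, $n\ge0$), $A_j$ atoms, $L_i$ atoms or negated atoms $\mathtt{not}\,A$, possibly with function symbols; $head(r)=\{A_1,\dots,A_m\}$; $\mathsf{Ground}(P)$ is its ground instantiation and $\mathit{atom}(r)$, $\mathit{atom}(\mathsf{Ground}(P))$ denote the sets of ground atoms occurring in $r$, resp. in $\mathsf{Ground}(P)$. The dependency graph of $P$ has ground atoms as vertices and an edge $A\to B$ whenever for some $r\in\mathsf{Ground}(P)$, $A\in head(r)$ and $B$ occurs in $r$ (body, positive or negated, or head). $A$ depends on $B$ if there is a directed path from $A$ to $B$ (every atom depends on itself). $P$ is finitely recursive iff every ground atom depends on finitely many ground atoms. A splitting set of $P$ is a set $U$ of ground atoms such that for all $r\in\mathsf{Ground}(P)$, $head(r)\cap U\ne\emptyset$ implies $\mathit{atom}(r)\subseteq U$. A (transfinite) sequence is a family indexed by $\{\alpha:\alpha<\mu\}$ for an ordinal $\mu$ (its length). A splitting sequence for $P$ is a sequence $\langle U_\alpha\rangle_{\alpha<\mu}$ of splitting sets of $P$ that is monotone ($U_\alpha\subseteq U_\beta$ for $\alpha<\beta$), continuous ($U_\lambda=\bigcup_{\nu<\lambda}U_\nu$ for limit $\lambda<\mu$), and satisfies $\bigcup_{\alpha<\mu}U_\alpha=\mathit{atom}(\mathsf{Ground}(P))$.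 A sequence $\langle X_\alpha\rangle_{\alpha<\mu}$ is smooth iff $X_0$ is finite and $X_{\alpha+1}\setminus X_\alpha$ is finite for every $\alpha+1<\mu$. *)

theory Defs
  imports Main "HOL-Library.Countable" "HOL-Library.Extended_Nat"
begin

datatype ('f, 'v) trm = Var 'v | Fn 'f "('f, 'v) trm list"

type_synonym ('p, 'f, 'v) atm = "'p \<times> ('f, 'v) trm list"

datatype 'a lit = Pos 'a | Neg 'a

fun lit_atom :: "'a lit \<Rightarrow> 'a" where
  "lit_atom (Pos a) = a"
| "lit_atom (Neg a) = a"

text \<open>A rule  A_1 v ... v A_m <- L_1, ..., L_n.\<close>
datatype 'a rule = Rule (head: "'a list") (body: "'a lit list")

type_synonym ('p, 'f, 'v) program = "('p, 'f, 'v) atm rule set"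

definition disj_program :: "('p, 'f, 'v) program \<Rightarrow> bool" where
  "disj_program P \<longleftrightarrow> (\<forall>r\<in>P. head r \<noteq> [])"

fun trm_vars :: "('f, 'v) trm \<Rightarrow> 'v set" where
  "trm_vars (Var v) = {v}"
| "trm_vars (Fn f ts) = (\<Union>t\<in>set ts. trm_vars t)"

definition ground_trm :: "('f, 'v) trm \<Rightarrow> bool" where
  "ground_trm t \<longleftrightarrow> trm_vars t = {}"

definition ground_atom :: "('p, 'f, 'v) atm \<Rightarrow> bool" where
  "ground_atom A \<longleftrightarrow> (\<forall>t\<in>set (snd A). ground_trm t)"

fun trm_subst :: "('v \<Rightarrow> ('f, 'v) trm) \<Rightarrow> ('f, 'v) trm \<Rightarrow> ('f, 'v) trm" where
  "trm_subst \<sigma> (Var v) = \<sigma> v"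
| "trm_subst \<sigma> (Fn f ts) = Fn f (map (trm_subst \<sigma>) ts)"

definition atm_subst :: "('v \<Rightarrow> ('f, 'v) trm) \<Rightarrow> ('p, 'f, 'v) atm \<Rightarrow> ('p, 'f, 'v) atm" where
  "atm_subst \<sigma> A = (fst A, map (trm_subst \<sigma>) (snd A))"

fun lit_subst :: "('v \<Rightarrow> ('f, 'v) trm) \<Rightarrow> ('p, 'f, 'v) atm lit \<Rightarrow> ('p, 'f, 'v) atm lit" where
  "lit_subst \<sigma> (Pos a) = Pos (atm_subst \<sigma> a)"
| "lit_subst \<sigma> (Neg a) = Neg (atm_subst \<sigma> a)"

definition rule_subst :: "('v \<Rightarrow> ('f, 'v) trm) \<Rightarrow> ('p, 'f, 'v) atm rule \<Rightarrow> ('p, 'f, 'v) atm rule" where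
  "rule_subst \<sigma> r = Rule (map (atm_subst \<sigma>) (head r)) (map (lit_subst \<sigma>) (body r))"

definition ground_subst :: "('v \<Rightarrow> ('f, 'v) trm) \<Rightarrow> bool" where
  "ground_subst \<sigma> \<longleftrightarrow> (\<forall>v. ground_trm (\<sigma> v))"

text \<open>Ground(P): all instances of rules of P by substitutions of ground terms
  (Herbrand universe = all ground terms over the function symbols of type 'f).\<close>
definition Ground :: "('p, 'f, 'v) program \<Rightarrow> ('p, 'f, 'v) program" where
  "Ground P = {rule_subst \<sigma> r | \<sigma> r. r \<in> P \<and> ground_subst \<sigma>}"

definition atoms_of_rule :: "'a rule \<Rightarrow> 'a set" where
  "atoms_of_rule r = set (head r) \<union> lit_atom ` set (body r)"

definition atom_Ground :: "('p, 'f, 'v) program \<Rightarrow> ('p, 'f, 'v) atm set" where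
  "atom_Ground P = (\<Union>r\<in>Ground P. atoms_of_rule r)"

definition dep_edge :: "('p, 'f, 'v) program \<Rightarrow> ('p, 'f, 'v) atm \<Rightarrow> ('p, 'f, 'v) atm \<Rightarrow> bool" where
  "dep_edge P A B \<longleftrightarrow> (\<exists>r\<in>Ground P. A \<in> set (head r) \<and> B \<in> atoms_of_rule r)"

definition depends_on :: "('p, 'f, 'v) program \<Rightarrow> ('p, 'f, 'v) atm \<Rightarrow> ('p, 'f, 'v) atm \<Rightarrow> bool" where
  "depends_on P A B \<longleftrightarrow> (dep_edge P)\<^sup>*\<^sup>* A B"

definition finitely_recursive :: "('p, 'f, 'v) program \<Rightarrow> bool" where
  "finitely_recursive P \<longleftrightarrow>
     (\<forall>A. ground_atom A \<longrightarrow> finite {B. depends_on P A B})"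

definition splitting_set :: "('p, 'f, 'v) program \<Rightarrow> ('p, 'f, 'v) atm set \<Rightarrow> bool" where
  "splitting_set P U \<longleftrightarrow> (\<forall>A\<in>U. ground_atom A) \<and>
     (\<forall>r\<in>Ground P. set (head r) \<inter> U \<noteq> {} \<longrightarrow> atoms_of_rule r \<subseteq> U)"

text \<open>A sequence of length \<mu> \<le> \<omega> is a function on nat, of which only the indices
  n with n < \<mu> matter; \<mu> :: enat, \<omega> = \<infinity>. Continuity is vacuous since there is
  no (nonzero) limit ordinal below \<omega>.\<close>
definition splitting_sequence ::
  "('p, 'f, 'v) program \<Rightarrow> enat \<Rightarrow> (nat \<Rightarrow> ('p, 'f, 'v) atm set) \<Rightarrow> bool" where
  "splitting_sequence P \<mu> U \<longleftrightarrow>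
     (\<forall>n. enat n < \<mu> \<longrightarrow> splitting_set P (U n)) \<and>
     (\<forall>m n. m < n \<and> enat n < \<mu> \<longrightarrow> U m \<subseteq> U n) \<and>
     (\<Union>{U n | n. enat n < \<mu>}) = atom_Ground P"

definition smooth :: "enat \<Rightarrow> (nat \<Rightarrow> 'a set) \<Rightarrow> bool" where
  "smooth \<mu> X \<longleftrightarrow> (0 < \<mu> \<longrightarrow> finite (X 0)) \<and>
     (\<forall>n. enat (Suc n) < \<mu> \<longrightarrow> finite (X (Suc n) - X n))"

end

theory Submission
  imports Defs
begin

instance trm :: (countable, countable) countable
  by countable_datatype

lemma ground_map: "trm_vars t = {} \<Longrightarrow> map_trm id h t = t"
  by (induction t) (auto intro: map_idI)

lemma countable_ground_atoms:
  "countable {A :: ('p::countable, 'f::countable, 'v) atm. ground_atom A}"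
proof -
  define er :: "('f, 'v) trm \<Rightarrow> ('f, unit) trm" where "er = map_trm id (\<lambda>_. ())"
  define li :: "('f, unit) trm \<Rightarrow> ('f, 'v) trm" where "li = map_trm id (\<lambda>_. undefined)"
  define liA :: "'p \<times> ('f, unit) trm list \<Rightarrow> ('p, 'f, 'v) atm" where
    "liA = (\<lambda>(p, ts). (p, map li ts))"
  have lt: "li (er t) = t" if "ground_trm t" for t
  proof -
    have "li (er t) = map_trm id ((\<lambda>_. undefined) \<circ> (\<lambda>_. ())) t"
      unfolding li_def er_def by (simp add: trm.map_comp)
    also have "\<dots> = t" using that ground_map unfolding ground_trm_def by blast
    finally show ?thesis .
  qed
  have "{A :: ('p, 'f, 'v) atm. ground_atom A} \<subseteq> range liA"
  proof
    fix A :: "('p, 'f, 'v) atm" assume "A \<in> {A. ground_atom A}"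
    hence g: "\<forall>t\<in>set (snd A). ground_trm t" by (simp add: ground_atom_def)
    have "liA (fst A, map er (snd A)) = A"
      using g by (cases A) (auto simp: liA_def lt intro: map_idI)
    thus "A \<in> range liA" by (metis rangeI)
  qed
  moreover have "countable (range liA)" by simp
  ultimately show ?thesis using countable_subset by blast
qed

lemma ground_rule_atoms:
  assumes "r \<in> Ground P" "A \<in> atoms_of_rule r" shows "ground_atom A"
proof -
  obtain \<sigma> r0 where r: "r = rule_subst \<sigma> r0" "ground_subst \<sigma>"
    using assms(1) unfolding Ground_def by blast
  have gt: "ground_trm (trm_subst \<sigma> t)" for t
    using r(2) by (induction t) (auto simp: ground_trm_def ground_subst_def)
  have ga: "ground_atom (atm_subst \<sigma> a)" for a
    using gt by (auto simp: ground_atom_def atm_subst_def)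
  have gl: "ground_atom (lit_atom (lit_subst \<sigma> l))" for l
    using ga by (cases l) auto
  show ?thesis using assms(2) unfolding r(1) atoms_of_rule_def rule_subst_def
  proof (simp only: rule.sel set_map Un_iff image_iff)
    assume "(\<exists>x\<in>set (head r0). A = atm_subst \<sigma> x) \<or>
       (\<exists>x\<in>lit_subst \<sigma> ` set (body r0). A = lit_atom x)"
    thus ?thesis using ga gl by blast
  qed
qed

lemma atom_Ground_ground: "A \<in> atom_Ground P \<Longrightarrow> ground_atom A"
  unfolding atom_Ground_def using ground_rule_atoms by blast

lemma dep_closed:
  assumes "depends_on P A B" "A \<in> U" "splitting_set P U"
  shows "B \<in> U"
  using assms(1,2) unfolding depends_on_def
proof (induction rule: rtranclp_induct)
  case base thus ?case by simp
next
  case (step y z)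
  then obtain r where "r \<in> Ground P" "y \<in> set (head r)" "z \<in> atoms_of_rule r"
    by (auto simp: dep_edge_def)
  thus ?case using step assms(3) unfolding splitting_set_def by blast
qed

lemma dep_in_atoms:
  assumes "depends_on P A B" "A \<in> atom_Ground P"
  shows "B \<in> atom_Ground P"
  using assms unfolding depends_on_def
proof (induction rule: rtranclp_induct)
  case base thus ?case by simp
next
  case (step y z)
  then obtain r where "r \<in> Ground P" "z \<in> atoms_of_rule r"
    by (auto simp: dep_edge_def)
  thus ?case by (auto simp: atom_Ground_def)
qed

lemma dep_outside:
  assumes "depends_on P A B" "A \<notin> atom_Ground P"
  shows "B = A"
  using assms unfolding depends_on_def
proof (induction rule: rtranclp_induct)
  case base thus ?case by simp
next
  case (step y z)
  then obtain r where "r \<in> Ground P" "y \<in> set (head r)"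
    by (auto simp: dep_edge_def)
  hence "y \<in> atom_Ground P" by (auto simp: atom_Ground_def atoms_of_rule_def)
  thus ?case using step by simp
qed

lemma smooth_finite:
  assumes "smooth \<mu> U" "\<forall>m n. m < n \<and> enat n < \<mu> \<longrightarrow> U m \<subseteq> U n" "enat n < \<mu>"
  shows "finite (U n)"
  using assms(3)
proof (induction n)
  case 0 thus ?case using assms(1) by (auto simp: smooth_def zero_enat_def)
next
  case (Suc n)
  hence lt: "enat n < \<mu>" by (metis Suc_ile_eq order_less_imp_le)
  have "U (Suc n) \<subseteq> U n \<union> (U (Suc n) - U n)" by blast
  moreover have "finite (U (Suc n) - U n)" using assms(1) Suc.prems by (auto simp: smooth_def)
  ultimately show ?case using Suc.IH lt finite_subset by blast
qed

theorem corollary3p5: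
  fixes P :: "('p::countable, 'f::countable, 'v) program"
  assumes "disj_program P"
  shows "finitely_recursive P \<longleftrightarrow>
           (\<exists>(\<mu>::enat) U. splitting_sequence P \<mu> U \<and> smooth \<mu> U)"
proof
  assume fr: "finitely_recursive P"
  show "\<exists>(\<mu>::enat) U. splitting_sequence P \<mu> U \<and> smooth \<mu> U"
  proof (cases "atom_Ground P = {}")
    case True
    have "splitting_sequence P 0 (\<lambda>_. {})" using True
      by (auto simp: splitting_sequence_def zero_enat_def)
    moreover have "smooth 0 (\<lambda>_. {} :: ('p, 'f, 'v) atm set)" by (simp add: smooth_def)
    ultimately show ?thesis by blast
  next
    case False
    let ?S = "atom_Ground P"
    have cS: "countable ?S"
      using countable_subset[OF _ countable_ground_atoms] atom_Ground_ground by blast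
    define e where "e = from_nat_into ?S"
    have re: "range e = ?S" using range_from_nat_into[OF False cS] e_def by simp
    define U where "U n = {B. \<exists>i\<le>n. depends_on P (e i) B}" for n
    have fin: "finite (U n)" for n
    proof -
      have "U n = (\<Union>i\<le>n. {B. depends_on P (e i) B})" by (auto simp: U_def)
      moreover have "ground_atom (e i)" for i using re atom_Ground_ground by blast
      ultimately show ?thesis using fr unfolding finitely_recursive_def by (simp del: split_paired_All)
    qed
    have ss: "splitting_set P (U n)" for n
      unfolding splitting_set_def
    proof (intro conjI ballI impI)
      fix A assume "A \<in> U n"
      then obtain i where "depends_on P (e i) A" by (auto simp: U_def)
      moreover have "e i \<in> ?S" using re by blast
      ultimately show "ground_atom A" using dep_in_atoms atom_Ground_ground by blast
    next
      fix r assume r: "r \<in> Ground P" "set (head r) \<inter> U n \<noteq> {}"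
      then obtain A i where A: "A \<in> set (head r)" "i \<le> n" "depends_on P (e i) A"
        by (auto simp: U_def)
      show "atoms_of_rule r \<subseteq> U n"
      proof
        fix B assume "B \<in> atoms_of_rule r"
        hence "dep_edge P A B" using r A by (auto simp: dep_edge_def)
        hence "depends_on P (e i) B" using A(3) by (simp add: depends_on_def)
        thus "B \<in> U n" using A(2) by (auto simp: U_def)
      qed
    qed
    have un: "\<Union>{U n | n. enat n < \<infinity>} = ?S"
    proof
      show "\<Union>{U n | n. enat n < \<infinity>} \<subseteq> ?S"
      proof
        fix B assume "B \<in> \<Union>{U n | n. enat n < \<infinity>}"
        then obtain n i where "depends_on P (e i) B" by (auto simp: U_def)
        moreover have "e i \<in> ?S" using re by blast
        ultimately show "B \<in> ?S" using dep_in_atoms by blast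
      qed
    next
      show "?S \<subseteq> \<Union>{U n | n. enat n < \<infinity>}"
      proof
        fix A assume "A \<in> ?S"
        then obtain i where "A = e i" using re by blast
        hence "A \<in> U i" by (auto simp: U_def depends_on_def)
        thus "A \<in> \<Union>{U n | n. enat n < \<infinity>}" by auto
      qed
    qed
    have mono: "U m \<subseteq> U n" if "m < n" for m n
      using that unfolding U_def by (auto intro: order.trans[of _ m n] dest: less_imp_le)
    have "splitting_sequence P \<infinity> U"
      unfolding splitting_sequence_def using ss un mono by blast
    moreover have "smooth \<infinity> U" using fin by (simp add: smooth_def)
    ultimately show ?thesis by blast
  qed
next
  assume "\<exists>(\<mu>::enat) U. splitting_sequence P \<mu> U \<and> smooth \<mu> U"
  then obtain \<mu> U where sq: "splitting_sequence P \<mu> U" and sm: "smooth \<mu> U" by blast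
  show "finitely_recursive P"
    unfolding finitely_recursive_def
  proof (intro allI impI)
    fix A :: "('p, 'f, 'v) atm" assume "ground_atom A"
    show "finite {B. depends_on P A B}"
    proof (cases "A \<in> atom_Ground P")
      case False
      hence "{B. depends_on P A B} \<subseteq> {A}" using dep_outside by blast
      thus ?thesis using finite_subset by blast
    next
      case True
      then obtain n where n: "enat n < \<mu>" "A \<in> U n"
        using sq unfolding splitting_sequence_def by blast
      have "splitting_set P (U n)" using sq n unfolding splitting_sequence_def by blast
      hence "{B. depends_on P A B} \<subseteq> U n" using dep_closed n by blast
      moreover have "finite (U n)"
        using smooth_finite[OF sm _ n(1)] sq unfolding splitting_sequence_def by blast
      ultimately show ?thesis using finite_subset by blast
    qed
  qed
qed

end
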